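(* Consider two simple totally unimodular matrices $$A_1=\begin{pmatrix}B&0\\ b^t&1\end{pmatrix},\qquad A_2=\begin{pmatrix}c^t&1\\ C&0\end{pmatrix},$$ where $B\in M_{g_1,n_1}(\mathbb{Z})$, $C\in M_{g_2,n_2}(\mathbb{Z})$ and $b,c$ are integer vectors, and assume that $\overline{Q_i}$ is well-suited for $A_i$ for $i=1,2$. Then one can write $$\overline{Q_1}=\begin{pmatrix}Q_1&r_1\\ r_1^t&1\end{pmatrix},\qquad \overline{Q_2}=\begin{pmatrix}1&r_2^t\\ r_2&Q_2\end{pmatrix}$$ with $Q_i\in M_{g_i,g_i}(\mathbb{R})$ and $r_i\in\mathbb{R}^{g_i}$, and $$\overline{Q}:=\begin{pmatrix}Q_1&r_1&r_1r_2^t\\ r_1^t&1&r_2^t\\ r_2r_1^t&r_2&Q_2\end{pmatrix}\ \text{ is well-suited for }\ A=\begin{pmatrix}B&0&0\\ b^t&c^t&1\\ 0&C&0\end{pmatrix}.$$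
   Context: A real matrix is totally unimodular if every square submatrix has determinant $-1,0$ or $1$; it is simple if it has no zero column and no two proportional columns. For a simple totally unimodular $A\in M_{g,n}(\mathbb{Z})$, a symmetric matrix $Q\in M_{g,g}(\mathbb{R})$ is well-suited for $A$ if $Q$ is positive definite and for every $\xi\in\mathbb{Z}^g\setminus\{0\}$ one has $\xi^tQ\xi\ge1$, with equality if and only if $\xi$ or $-\xi$ is a column vector of $A$. *)

theory Defs
  imports "Jordan_Normal_Form.Determinant" "Jordan_Normal_Form.DL_Submatrix"
begin

definition totally_unimodular :: "int mat \<Rightarrow> bool" where
  "totally_unimodular A \<longleftrightarrow>
     (\<forall>I J. I \<subseteq> {..<dim_row A} \<longrightarrow> J \<subseteq> {..<dim_col A} \<longrightarrow> card I = card J \<longrightarrow>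
        det (submatrix A I J) \<in> {-1, 0, 1})"

definition simple_mat :: "int mat \<Rightarrow> bool" where
  "simple_mat A \<longleftrightarrow>
     (\<forall>j < dim_col A. col A j \<noteq> 0\<^sub>v (dim_row A)) \<and>
     (\<forall>i < dim_col A. \<forall>j < dim_col A. i \<noteq> j \<longrightarrow>
        \<not> (\<exists>t::real. map_vec real_of_int (col A i) = t \<cdot>\<^sub>v map_vec real_of_int (col A j)))"

definition symmetric_real_mat :: "real mat \<Rightarrow> bool" where
  "symmetric_real_mat Q \<longleftrightarrow> transpose_mat Q = Q"

definition pos_def_mat :: "real mat \<Rightarrow> nat \<Rightarrow> bool" where
  "pos_def_mat Q g \<longleftrightarrow>
     (\<forall>x \<in> carrier_vec g. x \<noteq> 0\<^sub>v g \<longrightarrow> x \<bullet> (Q *\<^sub>v x) > 0)"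

(* Q is well-suited for the g x n matrix A (A is assumed simple totally unimodular
   where the notion is used). *)
definition well_suited :: "real mat \<Rightarrow> int mat \<Rightarrow> bool" where
  "well_suited Q A \<longleftrightarrow>
     (let g = dim_row A in
       Q \<in> carrier_mat g g \<and> symmetric_real_mat Q \<and> pos_def_mat Q g \<and>
       (\<forall>\<xi> \<in> carrier_vec g. \<xi> \<noteq> 0\<^sub>v g \<longrightarrow>
          (let x = map_vec real_of_int \<xi> in
             x \<bullet> (Q *\<^sub>v x) \<ge> 1 \<and>
             (x \<bullet> (Q *\<^sub>v x) = 1 \<longleftrightarrow>
                (\<exists>j < dim_col A. \<xi> = col A j \<or> - \<xi> = col A j)))))"

definition A1_mat :: "int mat \<Rightarrow> int vec \<Rightarrow> int mat" where
  "A1_mat B b = four_block_mat B (0\<^sub>m (dim_row B) 1) (mat_of_rows (dim_col B) [b]) (1\<^sub>m 1)"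

definition A2_mat :: "int mat \<Rightarrow> int vec \<Rightarrow> int mat" where
  "A2_mat C c = four_block_mat (mat_of_rows (dim_col C) [c]) (1\<^sub>m 1) C (0\<^sub>m (dim_row C) 1)"

(* A = [B 0 0; b^t c^t 1; 0 C 0] = [B 0; [b^t;0] A_2] *)
definition A_mat :: "int mat \<Rightarrow> int vec \<Rightarrow> int mat \<Rightarrow> int vec \<Rightarrow> int mat" where
  "A_mat B b C c = four_block_mat B (0\<^sub>m (dim_row B) (dim_col C + 1))
      (mat (dim_row C + 1) (dim_col B) (\<lambda>(i,j). if i = 0 then b $ j else 0))
      (A2_mat C c)"

definition Qbar1_mat :: "real mat \<Rightarrow> real vec \<Rightarrow> real mat" where
  "Qbar1_mat Q1 r1 = four_block_mat Q1 (mat_of_cols (dim_vec r1) [r1])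
      (mat_of_rows (dim_vec r1) [r1]) (1\<^sub>m 1)"

definition Qbar2_mat :: "real vec \<Rightarrow> real mat \<Rightarrow> real mat" where
  "Qbar2_mat r2 Q2 = four_block_mat (1\<^sub>m 1) (mat_of_rows (dim_vec r2) [r2])
      (mat_of_cols (dim_vec r2) [r2]) Q2"

(* [Q1 r1 r1 r2^t; r1^t 1 r2^t; r2 r1^t r2 Q2] = [Q1, r1 w^t; w r1^t, Qbar2] with w = (1; r2) *)
definition Qbar_mat :: "real mat \<Rightarrow> real vec \<Rightarrow> real vec \<Rightarrow> real mat \<Rightarrow> real mat" where
  "Qbar_mat Q1 r1 r2 Q2 =
     (let w = vec_of_list [1] @\<^sub>v r2 in
      four_block_mat Q1
        (mat_of_cols (dim_vec r1) [r1] * mat_of_rows (dim_vec w) [w])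
        (mat_of_cols (dim_vec w) [w] * mat_of_rows (dim_vec r1) [r1])
        (Qbar2_mat r2 Q2))"

end

theory Submission
  imports Defs
begin
lemma qf_block:
  fixes Q1 R S D :: "real mat"
  assumes "Q1 \<in> carrier_mat n1 n1" "R \<in> carrier_mat n1 n2" "S \<in> carrier_mat n2 n1" "D \<in> carrier_mat n2 n2"
    "x \<in> carrier_vec n1" "y \<in> carrier_vec n2"
  shows "(x @\<^sub>v y) \<bullet> (four_block_mat Q1 R S D *\<^sub>v (x @\<^sub>v y)) =
     x \<bullet> (Q1 *\<^sub>v x) + x \<bullet> (R *\<^sub>v y) + y \<bullet> (S *\<^sub>v x) + y \<bullet> (D *\<^sub>v y)"
proof -
  have "four_block_mat Q1 R S D *\<^sub>v (x @\<^sub>v y) = (Q1 *\<^sub>v x + R *\<^sub>v y) @\<^sub>v (S *\<^sub>v x + D *\<^sub>v y)"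
    by (rule four_block_mat_mult_vec[OF assms])
  also have "(x @\<^sub>v y) \<bullet> \<dots> = x \<bullet> (Q1 *\<^sub>v x + R *\<^sub>v y) + y \<bullet> (S *\<^sub>v x + D *\<^sub>v y)"
    by (rule scalar_prod_append[of _ n1 _ n2]) (use assms in auto)
  also have "\<dots> = x \<bullet> (Q1 *\<^sub>v x) + x \<bullet> (R *\<^sub>v y) + (y \<bullet> (S *\<^sub>v x) + y \<bullet> (D *\<^sub>v y))"
    by (subst scalar_prod_add_distrib[of _ n1], (use assms in auto)[3],
        subst scalar_prod_add_distrib[of _ n2], (use assms in auto)[3]) simp
  finally show ?thesis by simp
qed

lemma cols_mult_vec:
  fixes r v :: "real vec"
  assumes "r \<in> carrier_vec n" "v \<in> carrier_vec 1"
  shows "mat_of_cols n [r] *\<^sub>v v = (v $ 0) \<cdot>\<^sub>v r"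
  using assms by (intro eq_vecI) (auto simp: mat_of_cols_def row_def scalar_prod_def)

lemma rows_mult_vec:
  fixes r x :: "real vec"
  assumes "r \<in> carrier_vec n" "x \<in> carrier_vec n"
  shows "mat_of_rows n [r] *\<^sub>v x = vec 1 (\<lambda>_. r \<bullet> x)"
  using assms by (intro eq_vecI) (auto simp: mat_of_rows_def row_def scalar_prod_def)

lemma dim1_prod:
  fixes v :: "real vec"
  assumes "v \<in> carrier_vec 1"
  shows "v \<bullet> vec 1 (\<lambda>_. a) = v $ 0 * a" "v \<bullet> v = (v $ 0)^2"
  using assms by (auto simp: scalar_prod_def power2_eq_square)

lemma colrow_mult_vec:
  fixes r w y :: "real vec"
  assumes "r \<in> carrier_vec n" "w \<in> carrier_vec m" "y \<in> carrier_vec m"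
  shows "(mat_of_cols n [r] * mat_of_rows m [w]) *\<^sub>v y = (w \<bullet> y) \<cdot>\<^sub>v r"
proof -
  have "(mat_of_cols n [r] * mat_of_rows m [w]) *\<^sub>v y = mat_of_cols n [r] *\<^sub>v (mat_of_rows m [w] *\<^sub>v y)"
    by (rule assoc_mult_mat_vec[of _ n 1 _ m]) (use assms in auto)
  also have "\<dots> = (w \<bullet> y) \<cdot>\<^sub>v r"
    using assms by (simp add: rows_mult_vec cols_mult_vec)
  finally show ?thesis .
qed

lemma colrow_index:
  fixes r w :: "'a::comm_ring_1 vec"
  assumes "r \<in> carrier_vec n" "w \<in> carrier_vec m" "i < n" "j < m"
  shows "(mat_of_cols n [r] * mat_of_rows m [w]) $$ (i,j) = r $ i * w $ j"
  using assms by (auto simp: mat_of_cols_def mat_of_rows_def row_def col_def scalar_prod_def)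

lemma dim1_prod':
  fixes v :: "real vec"
  assumes "v \<in> carrier_vec (Suc 0)"
  shows "v \<bullet> vec (Suc 0) f = v $ 0 * f 0"
  using assms by (auto simp: scalar_prod_def)

lemma F1_formula:
  fixes Q1 :: "real mat"
  assumes "Q1 \<in> carrier_mat g g" "r \<in> carrier_vec g" "x \<in> carrier_vec g" "z \<in> carrier_vec 1"
  shows "(x @\<^sub>v z) \<bullet> (Qbar1_mat Q1 r *\<^sub>v (x @\<^sub>v z)) = x \<bullet> (Q1 *\<^sub>v x) + 2 * (z $ 0) * (x \<bullet> r) + (z $ 0)^2"
proof -
  have d: "dim_vec r = g" using assms by auto
  have "(x @\<^sub>v z) \<bullet> (Qbar1_mat Q1 r *\<^sub>v (x @\<^sub>v z)) = x \<bullet> (Q1 *\<^sub>v x) + x \<bullet> (mat_of_cols g [r] *\<^sub>v z)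
     + z \<bullet> (mat_of_rows g [r] *\<^sub>v x) + z \<bullet> (1\<^sub>m 1 *\<^sub>v z)"
    unfolding Qbar1_mat_def d by (rule qf_block) (use assms in auto)
  also have "\<dots> = x \<bullet> (Q1 *\<^sub>v x) + 2 * (z $ 0) * (x \<bullet> r) + (z $ 0)^2"
    using assms by (simp add: cols_mult_vec rows_mult_vec dim1_prod[OF assms(4)] dim1_prod' comm_scalar_prod[of r g x])
  finally show ?thesis .
qed

lemma F2_formula:
  fixes Q2 :: "real mat"
  assumes "Q2 \<in> carrier_mat g g" "r \<in> carrier_vec g" "x \<in> carrier_vec g" "z \<in> carrier_vec 1"
  shows "(z @\<^sub>v x) \<bullet> (Qbar2_mat r Q2 *\<^sub>v (z @\<^sub>v x)) = (z $ 0)^2 + 2 * (z $ 0) * (x \<bullet> r) + x \<bullet> (Q2 *\<^sub>v x)"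
proof -
  have d: "dim_vec r = g" using assms by auto
  have "(z @\<^sub>v x) \<bullet> (Qbar2_mat r Q2 *\<^sub>v (z @\<^sub>v x)) = z \<bullet> (1\<^sub>m 1 *\<^sub>v z) + z \<bullet> (mat_of_rows g [r] *\<^sub>v x)
     + x \<bullet> (mat_of_cols g [r] *\<^sub>v z) + x \<bullet> (Q2 *\<^sub>v x)"
    unfolding Qbar2_mat_def d by (rule qf_block) (use assms in auto)
  also have "\<dots> = (z $ 0)^2 + 2 * (z $ 0) * (x \<bullet> r) + x \<bullet> (Q2 *\<^sub>v x)"
    using assms by (simp add: cols_mult_vec rows_mult_vec dim1_prod[OF assms(4)] dim1_prod' comm_scalar_prod[of r g x])
  finally show ?thesis .
qed

lemma F_formula:
  fixes Q1 Q2 :: "real mat"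
  assumes "Q1 \<in> carrier_mat g1 g1" "r1 \<in> carrier_vec g1" "Q2 \<in> carrier_mat g2 g2" "r2 \<in> carrier_vec g2"
    "x1 \<in> carrier_vec g1" "z \<in> carrier_vec 1" "x2 \<in> carrier_vec g2"
  shows "(x1 @\<^sub>v (z @\<^sub>v x2)) \<bullet> (Qbar_mat Q1 r1 r2 Q2 *\<^sub>v (x1 @\<^sub>v (z @\<^sub>v x2))) =
     x1 \<bullet> (Q1 *\<^sub>v x1) + 2 * (x1 \<bullet> r1) * (z $ 0 + x2 \<bullet> r2) + (z $ 0)^2 + 2 * (z $ 0) * (x2 \<bullet> r2) + x2 \<bullet> (Q2 *\<^sub>v x2)"
proof -
  define w where "w = vec_of_list [1::real] @\<^sub>v r2"
  have v1: "vec_of_list [1::real] \<in> carrier_vec 1" by (rule carrier_vecI) simp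
  have w: "w \<in> carrier_vec (1 + g2)" unfolding w_def by (rule append_carrier_vec[OF v1 assms(4)])
  have d: "dim_vec r1 = g1" "dim_vec w = 1 + g2" using assms(2) w by auto
  have y: "z @\<^sub>v x2 \<in> carrier_vec (1 + g2)" using assms(6,7) by (rule append_carrier_vec)
  have wy: "w \<bullet> (z @\<^sub>v x2) = z $ 0 + r2 \<bullet> x2"
    unfolding w_def by (subst scalar_prod_append[OF v1 assms(4) assms(6) assms(7)]) (use assms(6) in \<open>auto simp: scalar_prod_def index_vec_of_list\<close>)
  have Q2b: "Qbar2_mat r2 Q2 \<in> carrier_mat (1 + g2) (1 + g2)"
    unfolding Qbar2_mat_def using assms(3,4) by (intro four_block_carrier_mat) auto
  have c1: "mat_of_cols g1 [r1] * mat_of_rows (1+g2) [w] \<in> carrier_mat g1 (1+g2)"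
    by (rule mult_carrier_mat[of _ g1 1]) auto
  have c2: "mat_of_cols (1+g2) [w] * mat_of_rows g1 [r1] \<in> carrier_mat (1+g2) g1"
    by (rule mult_carrier_mat[of _ "1+g2" 1]) auto
  have "(x1 @\<^sub>v (z @\<^sub>v x2)) \<bullet> (Qbar_mat Q1 r1 r2 Q2 *\<^sub>v (x1 @\<^sub>v (z @\<^sub>v x2))) =
     x1 \<bullet> (Q1 *\<^sub>v x1) + x1 \<bullet> ((mat_of_cols g1 [r1] * mat_of_rows (1+g2) [w]) *\<^sub>v (z @\<^sub>v x2))
     + (z @\<^sub>v x2) \<bullet> ((mat_of_cols (1+g2) [w] * mat_of_rows g1 [r1]) *\<^sub>v x1)
     + (z @\<^sub>v x2) \<bullet> (Qbar2_mat r2 Q2 *\<^sub>v (z @\<^sub>v x2))"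
    unfolding Qbar_mat_def Let_def w_def[symmetric] d by (rule qf_block[OF assms(1) c1 c2 Q2b assms(5) y])
  also have "x1 \<bullet> ((mat_of_cols g1 [r1] * mat_of_rows (1+g2) [w]) *\<^sub>v (z @\<^sub>v x2)) = (w \<bullet> (z @\<^sub>v x2)) * (x1 \<bullet> r1)"
    by (subst colrow_mult_vec[OF assms(2) w y]) (use assms(2,5) in simp)
  also have "(z @\<^sub>v x2) \<bullet> ((mat_of_cols (1+g2) [w] * mat_of_rows g1 [r1]) *\<^sub>v x1) = (r1 \<bullet> x1) * ((z @\<^sub>v x2) \<bullet> w)"
    by (subst colrow_mult_vec[OF w assms(2) assms(5)]) (use w y in simp)
  also have "(z @\<^sub>v x2) \<bullet> (Qbar2_mat r2 Q2 *\<^sub>v (z @\<^sub>v x2)) = (z $ 0)^2 + 2 * (z $ 0) * (x2 \<bullet> r2) + x2 \<bullet> (Q2 *\<^sub>v x2)"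
    by (rule F2_formula[OF assms(3,4,7,6)])
  also have "r1 \<bullet> x1 = x1 \<bullet> r1" by (rule comm_scalar_prod[OF assms(2,5)])
  also have "(z @\<^sub>v x2) \<bullet> w = w \<bullet> (z @\<^sub>v x2)" by (rule comm_scalar_prod[OF y w])
  finally show ?thesis unfolding wy comm_scalar_prod[OF assms(4,7)] by (simp add: algebra_simps power2_eq_square)
qed

lemma map_vec_append: "map_vec f (a @\<^sub>v b) = map_vec f a @\<^sub>v map_vec f b"
  by (intro eq_vecI) auto

lemma smult_append: "(e::'a::semiring_0) \<cdot>\<^sub>v (a @\<^sub>v b) = (e \<cdot>\<^sub>v a) @\<^sub>v (e \<cdot>\<^sub>v b)"
  by (intro eq_vecI) auto

lemma zero_append: "0\<^sub>v (n + m) = (0\<^sub>v n :: 'a::zero vec) @\<^sub>v 0\<^sub>v m"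
  by (intro eq_vecI) auto

lemma vec1_eq: "v \<in> carrier_vec (Suc 0) \<Longrightarrow> v = vec 1 (\<lambda>_. v $ 0)"
  by (intro eq_vecI) auto

lemma col_A1_1: assumes "B \<in> carrier_mat g1 n1" "b \<in> carrier_vec n1" "j < n1"
  shows "col (A1_mat B b) j = col B j @\<^sub>v vec 1 (\<lambda>_. b $ j)"
  using assms unfolding A1_mat_def by (intro eq_vecI) (auto simp: mat_of_rows_def)

lemma col_A1_2: assumes "B \<in> carrier_mat g1 n1" "b \<in> carrier_vec n1"
  shows "col (A1_mat B b) n1 = 0\<^sub>v g1 @\<^sub>v vec 1 (\<lambda>_. 1)"
  using assms unfolding A1_mat_def by (intro eq_vecI) (auto simp: mat_of_rows_def)

lemma col_A2_1: assumes "C \<in> carrier_mat g2 n2" "c \<in> carrier_vec n2" "k < n2"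
  shows "col (A2_mat C c) k = vec 1 (\<lambda>_. c $ k) @\<^sub>v col C k"
  using assms unfolding A2_mat_def by (intro eq_vecI) (auto simp: mat_of_rows_def)

lemma col_A2_2: assumes "C \<in> carrier_mat g2 n2" "c \<in> carrier_vec n2"
  shows "col (A2_mat C c) n2 = vec 1 (\<lambda>_. 1) @\<^sub>v 0\<^sub>v g2"
  using assms unfolding A2_mat_def by (intro eq_vecI) (auto simp: mat_of_rows_def)

lemma dims: assumes "B \<in> carrier_mat g1 n1" "C \<in> carrier_mat g2 n2"
  shows "dim_row (A1_mat B b) = g1 + 1" "dim_col (A1_mat B b) = n1 + 1"
    "dim_row (A2_mat C c) = 1 + g2" "dim_col (A2_mat C c) = n2 + 1"
    "dim_row (A_mat B b C c) = g1 + (1 + g2)" "dim_col (A_mat B b C c) = n1 + (n2 + 1)"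
  using assms by (auto simp: A1_mat_def A2_mat_def A_mat_def)

lemma col_A_1: assumes "B \<in> carrier_mat g1 n1" "b \<in> carrier_vec n1" "C \<in> carrier_mat g2 n2" "j < n1"
  shows "col (A_mat B b C c) j = col B j @\<^sub>v (vec 1 (\<lambda>_. b $ j) @\<^sub>v 0\<^sub>v g2)"
  using assms unfolding A_mat_def A2_mat_def by (intro eq_vecI) (auto simp: mat_of_rows_def)

lemma col_A_2: assumes "B \<in> carrier_mat g1 n1" "b \<in> carrier_vec n1" "C \<in> carrier_mat g2 n2" "k < n2 + 1"
  shows "col (A_mat B b C c) (n1 + k) = 0\<^sub>v g1 @\<^sub>v col (A2_mat C c) k"
  using assms unfolding A_mat_def A2_mat_def by (intro eq_vecI) (auto simp: mat_of_rows_def)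

lemma uq_unit: fixes Q :: "real mat" assumes "Q \<in> carrier_mat n n" "i < n"
  shows "unit_vec n i \<bullet> (Q *\<^sub>v unit_vec n i) = Q $$ (i,i)"
  using assms by (subst scalar_prod_left_unit[of _ n]) (auto simp: row_def)

lemma decomp1:
  fixes Qb :: "real mat"
  assumes "Qb \<in> carrier_mat (g+1) (g+1)" "transpose_mat Qb = Qb" "Qb $$ (g,g) = 1"
  shows "Qb = Qbar1_mat (mat g g (\<lambda>(i,j). Qb $$ (i,j))) (vec g (\<lambda>i. Qb $$ (i,g)))"
proof (rule eq_matI)
  have sym: "\<And>i j. i < g+1 \<Longrightarrow> j < g+1 \<Longrightarrow> Qb $$ (j,i) = Qb $$ (i,j)"
    using assms(1,2) by (metis carrier_matD(1) carrier_matD(2) index_transpose_mat(1))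
  fix i j assume ij: "i < dim_row (Qbar1_mat (mat g g (\<lambda>(i,j). Qb $$ (i,j))) (vec g (\<lambda>i. Qb $$ (i,g))))"
     "j < dim_col (Qbar1_mat (mat g g (\<lambda>(i,j). Qb $$ (i,j))) (vec g (\<lambda>i. Qb $$ (i,g))))"
  hence ij': "i < g+1" "j < g+1" by (auto simp: Qbar1_mat_def)
  show "Qb $$ (i,j) = Qbar1_mat (mat g g (\<lambda>(i,j). Qb $$ (i,j))) (vec g (\<lambda>i. Qb $$ (i,g))) $$ (i,j)"
    using ij' sym[of g j] assms(3) unfolding Qbar1_mat_def
    by (auto simp: mat_of_rows_def mat_of_cols_def less_Suc_eq)
qed (use assms in \<open>auto simp: Qbar1_mat_def\<close>)

lemma decomp2:
  fixes Qb :: "real mat"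
  assumes "Qb \<in> carrier_mat (1+g) (1+g)" "transpose_mat Qb = Qb" "Qb $$ (0,0) = 1"
  shows "Qb = Qbar2_mat (vec g (\<lambda>i. Qb $$ (i+1,0))) (mat g g (\<lambda>(i,j). Qb $$ (i+1,j+1)))"
proof (rule eq_matI)
  have sym: "\<And>i j. i < 1+g \<Longrightarrow> j < 1+g \<Longrightarrow> Qb $$ (j,i) = Qb $$ (i,j)"
    using assms(1,2) by (metis carrier_matD(1) carrier_matD(2) index_transpose_mat(1))
  fix i j assume ij: "i < dim_row (Qbar2_mat (vec g (\<lambda>i. Qb $$ (i+1,0))) (mat g g (\<lambda>(i,j). Qb $$ (i+1,j+1))))"
     "j < dim_col (Qbar2_mat (vec g (\<lambda>i. Qb $$ (i+1,0))) (mat g g (\<lambda>(i,j). Qb $$ (i+1,j+1))))"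
  hence ij': "i < 1+g" "j < 1+g" by (auto simp: Qbar2_mat_def)
  show "Qb $$ (i,j) = Qbar2_mat (vec g (\<lambda>i. Qb $$ (i+1,0))) (mat g g (\<lambda>(i,j). Qb $$ (i+1,j+1))) $$ (i,j)"
    using ij' sym[of 0 i] sym[of 0 j] assms(3) unfolding Qbar2_mat_def
    by (cases i; cases j) (auto simp: mat_of_rows_def mat_of_cols_def)
qed (use assms in \<open>auto simp: Qbar2_mat_def\<close>)

lemma round_bound: fixes s :: real shows "(real_of_int (- \<lfloor>s + 1/2\<rfloor>) + s)^2 \<le> 1/4"
proof -
  have a: "real_of_int \<lfloor>s + 1/2\<rfloor> \<le> s + 1/2" "s + 1/2 < real_of_int \<lfloor>s + 1/2\<rfloor> + 1"
    by linarith+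
  define d where "d = real_of_int (- \<lfloor>s + 1/2\<rfloor>) + s"
  have "-1/2 \<le> d" "d \<le> 1/2" using a unfolding d_def by linarith+
  hence "d^2 \<le> (1/2)^2" by (intro power2_le_iff_abs_le[THEN iffD2]) auto
  thus ?thesis unfolding d_def by (simp add: power_divide)
qed

lemma P1_pos:
  fixes Q1 :: "real mat"
  assumes "Q1 \<in> carrier_mat g g" "r \<in> carrier_vec g" "pos_def_mat (Qbar1_mat Q1 r) (g+1)"
    "x \<in> carrier_vec g" "x \<noteq> 0\<^sub>v g"
  shows "x \<bullet> (Q1 *\<^sub>v x) - (x \<bullet> r)^2 > 0"
proof -
  define z where "z = vec 1 (\<lambda>_::nat. - (x \<bullet> r))"
  have z: "z \<in> carrier_vec 1" unfolding z_def by simp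
  have nz: "x @\<^sub>v z \<noteq> 0\<^sub>v (g+1)"
    using assms(4,5) z by (subst zero_append) (auto simp: append_vec_eq)
  have "(x @\<^sub>v z) \<bullet> (Qbar1_mat Q1 r *\<^sub>v (x @\<^sub>v z)) > 0"
    using assms(3) nz assms(4) z unfolding pos_def_mat_def by blast
  also have "(x @\<^sub>v z) \<bullet> (Qbar1_mat Q1 r *\<^sub>v (x @\<^sub>v z)) = x \<bullet> (Q1 *\<^sub>v x) - (x \<bullet> r)^2"
    by (subst F1_formula[OF assms(1,2,4) z]) (simp add: z_def power2_eq_square)
  finally show ?thesis .
qed

lemma P2_pos:
  fixes Q2 :: "real mat"
  assumes "Q2 \<in> carrier_mat g g" "r \<in> carrier_vec g" "pos_def_mat (Qbar2_mat r Q2) (1+g)"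
    "x \<in> carrier_vec g" "x \<noteq> 0\<^sub>v g"
  shows "x \<bullet> (Q2 *\<^sub>v x) - (x \<bullet> r)^2 > 0"
proof -
  define z where "z = vec 1 (\<lambda>_::nat. - (x \<bullet> r))"
  have z: "z \<in> carrier_vec 1" unfolding z_def by simp
  have nz: "z @\<^sub>v x \<noteq> 0\<^sub>v (1+g)"
    using assms(4,5) z by (subst zero_append) (auto simp: append_vec_eq)
  have "(z @\<^sub>v x) \<bullet> (Qbar2_mat r Q2 *\<^sub>v (z @\<^sub>v x)) > 0"
    using assms(3) nz assms(4) z unfolding pos_def_mat_def by blast
  also have "(z @\<^sub>v x) \<bullet> (Qbar2_mat r Q2 *\<^sub>v (z @\<^sub>v x)) = x \<bullet> (Q2 *\<^sub>v x) - (x \<bullet> r)^2"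
    by (subst F2_formula[OF assms(1,2,4) z]) (simp add: z_def power2_eq_square)
  finally show ?thesis .
qed

lemma neg_append: "- (a @\<^sub>v b) = (- a) @\<^sub>v (- (b :: 'a :: group_add vec))"
  by (intro eq_vecI) auto

lemma vec1_carrier: "vec 1 f \<in> carrier_vec 1" by simp

lemma simple1_nonzero:
  assumes "B \<in> carrier_mat g1 n1" "b \<in> carrier_vec n1" "simple_mat (A1_mat B b)" "k < n1"
  shows "col B k \<noteq> 0\<^sub>v g1"
proof
  let ?A = "A1_mat B b"
  assume z: "col B k = 0\<^sub>v g1"
  have eq: "map_vec real_of_int (col (A1_mat B b) k) = real_of_int (b $ k) \<cdot>\<^sub>v map_vec real_of_int (col (A1_mat B b) n1)"
    unfolding col_A1_1[OF assms(1,2,4)] col_A1_2[OF assms(1,2)] z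
    by (intro eq_vecI) auto
  have kk: "k < dim_col (A1_mat B b)" "n1 < dim_col (A1_mat B b)" "k \<noteq> n1"
    using assms(1,4) by (auto simp: A1_mat_def)
  have H: "\<forall>i < dim_col ?A. \<forall>j < dim_col ?A. i \<noteq> j \<longrightarrow>
        \<not> (\<exists>t::real. map_vec real_of_int (col ?A i) = t \<cdot>\<^sub>v map_vec real_of_int (col ?A j))"
    using assms(3) unfolding simple_mat_def by (rule conjunct2)
  from H[rule_format, OF kk] eq show False by blast
qed

lemma simple2_nonzero:
  assumes "C \<in> carrier_mat g2 n2" "c \<in> carrier_vec n2" "simple_mat (A2_mat C c)" "k < n2"
  shows "col C k \<noteq> 0\<^sub>v g2"
proof
  let ?A = "A2_mat C c"
  assume z: "col C k = 0\<^sub>v g2"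
  have eq: "map_vec real_of_int (col (A2_mat C c) k) = real_of_int (c $ k) \<cdot>\<^sub>v map_vec real_of_int (col (A2_mat C c) n2)"
    unfolding col_A2_1[OF assms(1,2,4)] col_A2_2[OF assms(1,2)] z
    by (intro eq_vecI) auto
  have kk: "k < dim_col (A2_mat C c)" "n2 < dim_col (A2_mat C c)" "k \<noteq> n2"
    using assms(1,4) by (auto simp: A2_mat_def)
  have H: "\<forall>i < dim_col ?A. \<forall>j < dim_col ?A. i \<noteq> j \<longrightarrow>
        \<not> (\<exists>t::real. map_vec real_of_int (col ?A i) = t \<cdot>\<^sub>v map_vec real_of_int (col ?A j))"
    using assms(3) unfolding simple_mat_def by (rule conjunct2)
  from H[rule_format, OF kk] eq show False by blast
qed

lemma col_A_cases:
  assumes "B \<in> carrier_mat g1 n1" "b \<in> carrier_vec n1" "C \<in> carrier_mat g2 n2" "c \<in> carrier_vec n2"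
    "j < n1 + (n2 + 1)"
  shows "(j < n1 \<and> col (A_mat B b C c) j = col B j @\<^sub>v (vec 1 (\<lambda>_. b $ j) @\<^sub>v 0\<^sub>v g2)) \<or>
    (\<exists>k<n2. j = n1 + k \<and> col (A_mat B b C c) j = 0\<^sub>v g1 @\<^sub>v (vec 1 (\<lambda>_. c $ k) @\<^sub>v col C k)) \<or>
    (j = n1 + n2 \<and> col (A_mat B b C c) j = 0\<^sub>v g1 @\<^sub>v (vec 1 (\<lambda>_. 1) @\<^sub>v 0\<^sub>v g2))"
proof (cases "j < n1")
  case True thus ?thesis using col_A_1[OF assms(1,2,3) True] by (intro disjI1) simp
next
  case False
  define k where "k = j - n1"
  have k: "j = n1 + k" "k < n2 + 1" using assms(5) False unfolding k_def by linarith+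
  show ?thesis
  proof (cases "k < n2")
    case True
    have "col (A_mat B b C c) j = 0\<^sub>v g1 @\<^sub>v (vec 1 (\<lambda>_. c $ k) @\<^sub>v col C k)"
      unfolding k(1) col_A_2[where c=c, OF assms(1,2,3) k(2)] col_A2_1[OF assms(3,4) True] ..
    thus ?thesis using True k(1) by (intro disjI2 disjI1 exI[of _ k]) simp
  next
    case False hence kn: "k = n2" using k by auto
    have "col (A_mat B b C c) j = 0\<^sub>v g1 @\<^sub>v (vec 1 (\<lambda>_. 1) @\<^sub>v 0\<^sub>v g2)"
      using col_A_2[where c=c, OF assms(1,2,3) k(2)] col_A2_2[OF assms(3,4)] k(1) kn by simp
    thus ?thesis using k(1) kn by (intro disjI2 disjI2) simp
  qed
qed

lemma app_eq_dim: "dim_vec a = dim_vec a' \<Longrightarrow> (a @\<^sub>v b = a' @\<^sub>v b') = (a = a' \<and> b = b')"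
  by (rule append_vec_eq[OF carrier_vecI carrier_vecI]) auto

lemma eqv1:
  assumes B: "B \<in> carrier_mat g1 n1" and b: "b \<in> carrier_vec n1" and C: "C \<in> carrier_mat g2 n2"
    and c: "c \<in> carrier_vec n2" and s2: "simple_mat (A2_mat C c)"
    and x1: "x1 \<in> carrier_vec g1" and z: "z \<in> carrier_vec 1"
  shows "(\<exists>j<n1+1. x1 @\<^sub>v z = col (A1_mat B b) j \<or> - (x1 @\<^sub>v z) = col (A1_mat B b) j) \<longleftrightarrow>
    (\<exists>j<n1+(n2+1). x1 @\<^sub>v (z @\<^sub>v 0\<^sub>v g2) = col (A_mat B b C c) j \<or>
       - (x1 @\<^sub>v (z @\<^sub>v 0\<^sub>v g2)) = col (A_mat B b C c) j)"
proof -
  have d: "dim_vec x1 = g1" "dim_vec z = 1" "dim_row B = g1" "dim_row C = g2" using assms by auto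
  have kn: "n2 < n2 + 1" by simp
  have cA: "col (A_mat B b C c) (n1+n2) = 0\<^sub>v g1 @\<^sub>v (vec 1 (\<lambda>_. 1) @\<^sub>v 0\<^sub>v g2)"
    by (subst col_A_2[where c=c, OF B b C kn], subst col_A2_2[OF C c], rule refl)
  show ?thesis
  proof
    assume "\<exists>j<n1+1. x1 @\<^sub>v z = col (A1_mat B b) j \<or> - (x1 @\<^sub>v z) = col (A1_mat B b) j"
    then obtain j where jh: "j < n1 + 1 \<and> (x1 @\<^sub>v z = col (A1_mat B b) j \<or> - (x1 @\<^sub>v z) = col (A1_mat B b) j)"
      ..
    note j = conjunct1[OF jh] and h = conjunct2[OF jh]
    show "\<exists>j<n1+(n2+1). x1 @\<^sub>v (z @\<^sub>v 0\<^sub>v g2) = col (A_mat B b C c) j \<or>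
       - (x1 @\<^sub>v (z @\<^sub>v 0\<^sub>v g2)) = col (A_mat B b C c) j"
    proof (cases "j < n1")
      case True
      have "x1 @\<^sub>v (z @\<^sub>v 0\<^sub>v g2) = col (A_mat B b C c) j \<or> - (x1 @\<^sub>v (z @\<^sub>v 0\<^sub>v g2)) = col (A_mat B b C c) j"
        using h unfolding col_A1_1[OF B b True] col_A_1[OF B b C True] by (simp add: neg_append app_eq_dim d)
      thus ?thesis using True by (intro exI[of _ j]) simp
    next
      case False hence jn: "j = n1" using j by simp
      have "x1 @\<^sub>v (z @\<^sub>v 0\<^sub>v g2) = col (A_mat B b C c) (n1+n2) \<or> - (x1 @\<^sub>v (z @\<^sub>v 0\<^sub>v g2)) = col (A_mat B b C c) (n1+n2)"
        using h unfolding jn col_A1_2[OF B b] cA by (simp add: neg_append app_eq_dim d)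
      thus ?thesis by (intro exI[of _ "n1+n2"]) simp
    qed
  next
    assume "\<exists>j<n1+(n2+1). x1 @\<^sub>v (z @\<^sub>v 0\<^sub>v g2) = col (A_mat B b C c) j \<or>
       - (x1 @\<^sub>v (z @\<^sub>v 0\<^sub>v g2)) = col (A_mat B b C c) j"
    then obtain j where jh: "j < n1+(n2+1) \<and> (x1 @\<^sub>v (z @\<^sub>v 0\<^sub>v g2) = col (A_mat B b C c) j \<or>
       - (x1 @\<^sub>v (z @\<^sub>v 0\<^sub>v g2)) = col (A_mat B b C c) j)" ..
    note j = conjunct1[OF jh] and h = conjunct2[OF jh]
    from col_A_cases[OF B b C c j] show "\<exists>j<n1+1. x1 @\<^sub>v z = col (A1_mat B b) j \<or> - (x1 @\<^sub>v z) = col (A1_mat B b) j"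
    proof (elim disjE conjE exE)
      assume jl: "j < n1" and cj: "col (A_mat B b C c) j = col B j @\<^sub>v (vec 1 (\<lambda>_. b $ j) @\<^sub>v 0\<^sub>v g2)"
      have "x1 @\<^sub>v z = col (A1_mat B b) j \<or> - (x1 @\<^sub>v z) = col (A1_mat B b) j"
        using h unfolding cj col_A1_1[OF B b jl] by (simp add: neg_append app_eq_dim d)
      thus ?thesis using jl by (intro exI[of _ j]) simp
    next
      fix k assume k: "k < n2" and cj: "col (A_mat B b C c) j = 0\<^sub>v g1 @\<^sub>v (vec 1 (\<lambda>_. c $ k) @\<^sub>v col C k)"
      have "0\<^sub>v g2 = col C k"
        using h unfolding cj by (simp add: neg_append app_eq_dim d) (elim disjE conjE; assumption)
      hence False by (rule notE[OF simple2_nonzero[OF C c s2 k], OF sym])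
      thus ?thesis ..
    next
      assume cj: "col (A_mat B b C c) j = 0\<^sub>v g1 @\<^sub>v (vec 1 (\<lambda>_. 1) @\<^sub>v 0\<^sub>v g2)"
      have "x1 @\<^sub>v z = col (A1_mat B b) n1 \<or> - (x1 @\<^sub>v z) = col (A1_mat B b) n1"
        using h unfolding cj col_A1_2[OF B b] by (simp add: neg_append app_eq_dim d)
      thus ?thesis by (intro exI[of _ n1]) simp
    qed
  qed
qed

lemma eqv2:
  assumes B: "B \<in> carrier_mat g1 n1" and b: "b \<in> carrier_vec n1" and C: "C \<in> carrier_mat g2 n2"
    and c: "c \<in> carrier_vec n2" and s1: "simple_mat (A1_mat B b)"
    and x2: "x2 \<in> carrier_vec g2" and z: "z \<in> carrier_vec 1"
  shows "(\<exists>j<n2+1. z @\<^sub>v x2 = col (A2_mat C c) j \<or> - (z @\<^sub>v x2) = col (A2_mat C c) j) \<longleftrightarrow>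
    (\<exists>j<n1+(n2+1). 0\<^sub>v g1 @\<^sub>v (z @\<^sub>v x2) = col (A_mat B b C c) j \<or>
       - (0\<^sub>v g1 @\<^sub>v (z @\<^sub>v x2)) = col (A_mat B b C c) j)"
proof -
  have d: "dim_vec x2 = g2" "dim_vec z = 1" "dim_row B = g1" "dim_row C = g2" using B C x2 z by auto
  show ?thesis
  proof
    assume "\<exists>j<n2+1. z @\<^sub>v x2 = col (A2_mat C c) j \<or> - (z @\<^sub>v x2) = col (A2_mat C c) j"
    then obtain j where jh: "j < n2 + 1 \<and> (z @\<^sub>v x2 = col (A2_mat C c) j \<or> - (z @\<^sub>v x2) = col (A2_mat C c) j)"
      ..
    note j = conjunct1[OF jh] and h = conjunct2[OF jh]
    have "0\<^sub>v g1 @\<^sub>v (z @\<^sub>v x2) = col (A_mat B b C c) (n1+j) \<or>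
       - (0\<^sub>v g1 @\<^sub>v (z @\<^sub>v x2)) = col (A_mat B b C c) (n1+j)"
      using h unfolding col_A_2[where c=c, OF B b C j] by (simp add: neg_append app_eq_dim d)
    thus "\<exists>j<n1+(n2+1). 0\<^sub>v g1 @\<^sub>v (z @\<^sub>v x2) = col (A_mat B b C c) j \<or>
       - (0\<^sub>v g1 @\<^sub>v (z @\<^sub>v x2)) = col (A_mat B b C c) j"
      using j by (intro exI[of _ "n1+j"]) simp
  next
    assume "\<exists>j<n1+(n2+1). 0\<^sub>v g1 @\<^sub>v (z @\<^sub>v x2) = col (A_mat B b C c) j \<or>
       - (0\<^sub>v g1 @\<^sub>v (z @\<^sub>v x2)) = col (A_mat B b C c) j"
    then obtain j where jh: "j < n1+(n2+1) \<and> (0\<^sub>v g1 @\<^sub>v (z @\<^sub>v x2) = col (A_mat B b C c) j \<or>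
       - (0\<^sub>v g1 @\<^sub>v (z @\<^sub>v x2)) = col (A_mat B b C c) j)" ..
    note j = conjunct1[OF jh] and h = conjunct2[OF jh]
    show "\<exists>j<n2+1. z @\<^sub>v x2 = col (A2_mat C c) j \<or> - (z @\<^sub>v x2) = col (A2_mat C c) j"
    proof (cases "j < n1")
      case True
      have "0\<^sub>v g1 = col B j"
        using h unfolding col_A_1[OF B b C True] by (simp add: neg_append app_eq_dim d) (elim disjE conjE; assumption)
      hence False by (rule notE[OF simple1_nonzero[OF B b s1 True], OF sym])
      thus ?thesis ..
    next
      case False
      define k where "k = j - n1"
      have k: "j = n1 + k" "k < n2 + 1" using j False unfolding k_def by linarith+
      have "z @\<^sub>v x2 = col (A2_mat C c) k \<or> - (z @\<^sub>v x2) = col (A2_mat C c) k"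
        using h unfolding k(1) col_A_2[where c=c, OF B b C k(2)] by (simp add: neg_append app_eq_dim d)
      thus ?thesis using k(2) by (intro exI[of _ k]) simp
    qed
  qed
qed

lemma eqv3:
  assumes B: "B \<in> carrier_mat g1 n1" and b: "b \<in> carrier_vec n1" and C: "C \<in> carrier_mat g2 n2"
    and c: "c \<in> carrier_vec n2"
    and x1: "x1 \<in> carrier_vec g1" and x2: "x2 \<in> carrier_vec g2" and z: "z \<in> carrier_vec 1"
    and n1: "x1 \<noteq> 0\<^sub>v g1" and n2: "x2 \<noteq> 0\<^sub>v g2"
  shows "\<not> (\<exists>j<n1+(n2+1). x1 @\<^sub>v (z @\<^sub>v x2) = col (A_mat B b C c) j \<or>
       - (x1 @\<^sub>v (z @\<^sub>v x2)) = col (A_mat B b C c) j)"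
proof
  have d: "dim_vec x1 = g1" "dim_vec x2 = g2" "dim_vec z = 1" "dim_row B = g1" "dim_row C = g2" using B C x1 x2 z by auto
  assume "\<exists>j<n1+(n2+1). x1 @\<^sub>v (z @\<^sub>v x2) = col (A_mat B b C c) j \<or>
       - (x1 @\<^sub>v (z @\<^sub>v x2)) = col (A_mat B b C c) j"
  then obtain j where jh: "j < n1+(n2+1) \<and> (x1 @\<^sub>v (z @\<^sub>v x2) = col (A_mat B b C c) j \<or>
       - (x1 @\<^sub>v (z @\<^sub>v x2)) = col (A_mat B b C c) j)" ..
  note j = conjunct1[OF jh] and h = conjunct2[OF jh]
  have nn1: "- x1 \<noteq> 0\<^sub>v g1" using n1 by (metis uminus_uminus_vec uminus_zero_vec)
  have nn2: "- x2 \<noteq> 0\<^sub>v g2" using n2 by (metis uminus_uminus_vec uminus_zero_vec)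
  from col_A_cases[OF B b C c j] show False
  proof (elim disjE conjE exE)
    assume jl: "j < n1" and cj: "col (A_mat B b C c) j = col B j @\<^sub>v (vec 1 (\<lambda>_. b $ j) @\<^sub>v 0\<^sub>v g2)"
    show False using h n2 nn2 unfolding cj by (simp add: neg_append app_eq_dim d)
  next
    fix k assume k: "k < n2" and cj: "col (A_mat B b C c) j = 0\<^sub>v g1 @\<^sub>v (vec 1 (\<lambda>_. c $ k) @\<^sub>v col C k)"
    show False using h n1 nn1 unfolding cj by (simp add: neg_append app_eq_dim d)
  next
    assume cj: "col (A_mat B b C c) j = 0\<^sub>v g1 @\<^sub>v (vec 1 (\<lambda>_. 1) @\<^sub>v 0\<^sub>v g2)"
    show False using h n1 nn1 unfolding cj by (simp add: neg_append app_eq_dim d)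
  qed
qed

lemma key_real:
  fixes Q1 Q2 :: "real mat"
  assumes "Q1 \<in> carrier_mat g1 g1" "r1 \<in> carrier_vec g1" "Q2 \<in> carrier_mat g2 g2" "r2 \<in> carrier_vec g2"
    "x1 \<in> carrier_vec g1" "z \<in> carrier_vec 1" "x2 \<in> carrier_vec g2"
  shows "(x1 @\<^sub>v (z @\<^sub>v x2)) \<bullet> (Qbar_mat Q1 r1 r2 Q2 *\<^sub>v (x1 @\<^sub>v (z @\<^sub>v x2))) =
     (x1 \<bullet> (Q1 *\<^sub>v x1) - (x1 \<bullet> r1)^2) + (x2 \<bullet> (Q2 *\<^sub>v x2) - (x2 \<bullet> r2)^2) + (z $ 0 + x1 \<bullet> r1 + x2 \<bullet> r2)^2"
  unfolding F_formula[OF assms] by (simp add: power2_eq_square algebra_simps)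

lemma F_x2_zero:
  fixes Q1 Q2 :: "real mat"
  assumes "Q1 \<in> carrier_mat g1 g1" "r1 \<in> carrier_vec g1" "Q2 \<in> carrier_mat g2 g2" "r2 \<in> carrier_vec g2"
    "x1 \<in> carrier_vec g1" "z \<in> carrier_vec 1"
  shows "(x1 @\<^sub>v (z @\<^sub>v 0\<^sub>v g2)) \<bullet> (Qbar_mat Q1 r1 r2 Q2 *\<^sub>v (x1 @\<^sub>v (z @\<^sub>v 0\<^sub>v g2))) =
     (x1 @\<^sub>v z) \<bullet> (Qbar1_mat Q1 r1 *\<^sub>v (x1 @\<^sub>v z))"
proof -
  have a: "0\<^sub>v g2 \<bullet> r2 = 0" using assms(4) by simp
  have b: "0\<^sub>v g2 \<bullet> (Q2 *\<^sub>v 0\<^sub>v g2) = (0::real)"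
    by (rule scalar_prod_left_zero[of _ g2]) (rule mult_mat_vec_carrier[OF assms(3)], simp)
  show ?thesis unfolding F_formula[OF assms zero_carrier_vec] F1_formula[OF assms(1,2,5,6)] a b
    by simp
qed

lemma F_x1_zero:
  fixes Q1 Q2 :: "real mat"
  assumes "Q1 \<in> carrier_mat g1 g1" "r1 \<in> carrier_vec g1" "Q2 \<in> carrier_mat g2 g2" "r2 \<in> carrier_vec g2"
    "z \<in> carrier_vec 1" "x2 \<in> carrier_vec g2"
  shows "(0\<^sub>v g1 @\<^sub>v (z @\<^sub>v x2)) \<bullet> (Qbar_mat Q1 r1 r2 Q2 *\<^sub>v (0\<^sub>v g1 @\<^sub>v (z @\<^sub>v x2))) =
     (z @\<^sub>v x2) \<bullet> (Qbar2_mat r2 Q2 *\<^sub>v (z @\<^sub>v x2))"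
proof -
  have a: "0\<^sub>v g1 \<bullet> r1 = 0" using assms(2) by simp
  have b: "0\<^sub>v g1 \<bullet> (Q1 *\<^sub>v 0\<^sub>v g1) = (0::real)"
    by (rule scalar_prod_left_zero[of _ g1]) (rule mult_mat_vec_carrier[OF assms(1)], simp)
  show ?thesis unfolding F_formula[OF assms(1-4) zero_carrier_vec assms(5,6)] F2_formula[OF assms(3,4,6,5)] a b
    by simp
qed

lemma P1_int:
  fixes Q1 :: "real mat" and \<xi> :: "int vec"
  assumes "Q1 \<in> carrier_mat g g" "r \<in> carrier_vec g"
    "\<forall>\<eta>\<in>carrier_vec (g+1). \<eta> \<noteq> 0\<^sub>v (g+1) \<longrightarrow>
       1 \<le> map_vec real_of_int \<eta> \<bullet> (Qbar1_mat Q1 r *\<^sub>v map_vec real_of_int \<eta>)"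
    "\<xi> \<in> carrier_vec g" "\<xi> \<noteq> 0\<^sub>v g"
  shows "map_vec real_of_int \<xi> \<bullet> (Q1 *\<^sub>v map_vec real_of_int \<xi>) - (map_vec real_of_int \<xi> \<bullet> r)^2 \<ge> 3/4"
proof -
  define x where "x = map_vec real_of_int \<xi>"
  have x: "x \<in> carrier_vec g" unfolding x_def using assms(4) by simp
  define s where "s = x \<bullet> r"
  define a where "a = - \<lfloor>s + 1/2\<rfloor>"
  define \<eta> where "\<eta> = \<xi> @\<^sub>v vec 1 (\<lambda>_. a)"
  have eta: "\<eta> \<in> carrier_vec (g+1)" unfolding \<eta>_def using assms(4) by (intro append_carrier_vec) auto
  have nz: "\<eta> \<noteq> 0\<^sub>v (g+1)"
    unfolding \<eta>_def zero_append using assms(4,5) by (simp add: app_eq_dim)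
  have z: "vec 1 (\<lambda>_. real_of_int a) \<in> carrier_vec 1" by simp
  have me: "map_vec real_of_int \<eta> = x @\<^sub>v vec 1 (\<lambda>_. real_of_int a)"
    unfolding \<eta>_def x_def map_vec_append by (intro arg_cong[where f="\<lambda>v. _ @\<^sub>v v"] eq_vecI) auto
  have "1 \<le> map_vec real_of_int \<eta> \<bullet> (Qbar1_mat Q1 r *\<^sub>v map_vec real_of_int \<eta>)"
    using assms(3) eta nz by blast
  also have "\<dots> = x \<bullet> (Q1 *\<^sub>v x) + 2 * real_of_int a * s + (real_of_int a)^2"
    unfolding me F1_formula[OF assms(1,2) x z] s_def by simp
  finally have h: "1 \<le> x \<bullet> (Q1 *\<^sub>v x) - s^2 + (real_of_int a + s)^2" by (simp add: power2_eq_square algebra_simps)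
  have "(real_of_int a + s)^2 \<le> 1/4" unfolding a_def by (rule round_bound)
  with h have "x \<bullet> (Q1 *\<^sub>v x) - s^2 \<ge> 3/4" by linarith
  thus ?thesis unfolding x_def s_def .
qed

lemma P2_int:
  fixes Q2 :: "real mat" and \<xi> :: "int vec"
  assumes "Q2 \<in> carrier_mat g g" "r \<in> carrier_vec g"
    "\<forall>\<eta>\<in>carrier_vec (1+g). \<eta> \<noteq> 0\<^sub>v (1+g) \<longrightarrow>
       1 \<le> map_vec real_of_int \<eta> \<bullet> (Qbar2_mat r Q2 *\<^sub>v map_vec real_of_int \<eta>)"
    "\<xi> \<in> carrier_vec g" "\<xi> \<noteq> 0\<^sub>v g"
  shows "map_vec real_of_int \<xi> \<bullet> (Q2 *\<^sub>v map_vec real_of_int \<xi>) - (map_vec real_of_int \<xi> \<bullet> r)^2 \<ge> 3/4"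
proof -
  define x where "x = map_vec real_of_int \<xi>"
  have x: "x \<in> carrier_vec g" unfolding x_def using assms(4) by simp
  define s where "s = x \<bullet> r"
  define a where "a = - \<lfloor>s + 1/2\<rfloor>"
  define \<eta> where "\<eta> = vec 1 (\<lambda>_. a) @\<^sub>v \<xi>"
  have eta: "\<eta> \<in> carrier_vec (1+g)" unfolding \<eta>_def using assms(4) by (intro append_carrier_vec) auto
  have nz: "\<eta> \<noteq> 0\<^sub>v (1+g)"
    unfolding \<eta>_def zero_append using assms(4,5) by (simp add: app_eq_dim)
  have z: "vec 1 (\<lambda>_. real_of_int a) \<in> carrier_vec 1" by simp
  have me: "map_vec real_of_int \<eta> = vec 1 (\<lambda>_. real_of_int a) @\<^sub>v x"
    unfolding \<eta>_def x_def map_vec_append by (intro arg_cong[where f="\<lambda>v. v @\<^sub>v _"] eq_vecI) auto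
  have "1 \<le> map_vec real_of_int \<eta> \<bullet> (Qbar2_mat r Q2 *\<^sub>v map_vec real_of_int \<eta>)"
    using assms(3) eta nz by blast
  also have "\<dots> = x \<bullet> (Q2 *\<^sub>v x) + 2 * real_of_int a * s + (real_of_int a)^2"
    unfolding me F2_formula[OF assms(1,2) x z] s_def by simp
  finally have h: "1 \<le> x \<bullet> (Q2 *\<^sub>v x) - s^2 + (real_of_int a + s)^2" by (simp add: power2_eq_square algebra_simps)
  have "(real_of_int a + s)^2 \<le> 1/4" unfolding a_def by (rule round_bound)
  with h have "x \<bullet> (Q2 *\<^sub>v x) - s^2 \<ge> 3/4" by linarith
  thus ?thesis unfolding x_def s_def .
qed

lemma vec1_zero: "z \<in> carrier_vec (Suc 0) \<Longrightarrow> z $ 0 = 0 \<Longrightarrow> z = 0\<^sub>v (Suc 0)"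
  by (intro eq_vecI) auto

lemma posdef_QQ:
  fixes Q1 Q2 :: "real mat"
  assumes Q1c: "Q1 \<in> carrier_mat g1 g1" and r1c: "r1 \<in> carrier_vec g1"
    and Q2c: "Q2 \<in> carrier_mat g2 g2" and r2c: "r2 \<in> carrier_vec g2"
    and p1: "pos_def_mat (Qbar1_mat Q1 r1) (g1+1)" and p2: "pos_def_mat (Qbar2_mat r2 Q2) (1+g2)"
  shows "pos_def_mat (Qbar_mat Q1 r1 r2 Q2) (g1+(1+g2))"
  unfolding pos_def_mat_def
proof (intro ballI impI)
  fix X :: "real vec" assume X: "X \<in> carrier_vec (g1+(1+g2))" and nz: "X \<noteq> 0\<^sub>v (g1+(1+g2))"
  define x1 where "x1 = vec_first X g1"
  define Y where "Y = vec_last X (1+g2)"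
  define z where "z = vec_first Y 1"
  define x2 where "x2 = vec_last Y g2"
  have x1: "x1 \<in> carrier_vec g1" unfolding x1_def by simp
  have Y: "Y \<in> carrier_vec (1+g2)" unfolding Y_def by simp
  have z: "z \<in> carrier_vec 1" unfolding z_def by simp
  have x2: "x2 \<in> carrier_vec g2" unfolding x2_def by simp
  have Ye: "Y = z @\<^sub>v x2" unfolding z_def x2_def by (rule vec_first_last_append[OF Y, symmetric])
  have Xe: "X = x1 @\<^sub>v (z @\<^sub>v x2)" unfolding x1_def Ye[symmetric] Y_def by (rule vec_first_last_append[OF X, symmetric])
  define P1 where "P1 = x1 \<bullet> (Q1 *\<^sub>v x1) - (x1 \<bullet> r1)^2"
  define P2 where "P2 = x2 \<bullet> (Q2 *\<^sub>v x2) - (x2 \<bullet> r2)^2"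
  have F: "X \<bullet> (Qbar_mat Q1 r1 r2 Q2 *\<^sub>v X) = P1 + P2 + (z $ 0 + x1 \<bullet> r1 + x2 \<bullet> r2)^2"
    unfolding Xe P1_def P2_def by (rule key_real[OF Q1c r1c Q2c r2c x1 z x2])
  have z1: "x1 = 0\<^sub>v g1 \<Longrightarrow> x1 \<bullet> r1 = 0 \<and> P1 = 0"
  proof -
    assume e: "x1 = 0\<^sub>v g1"
    have "x1 \<bullet> (Q1 *\<^sub>v x1) = 0" unfolding e by (rule scalar_prod_left_zero[of _ g1]) (rule mult_mat_vec_carrier[OF Q1c], simp)
    moreover have "x1 \<bullet> r1 = 0" unfolding e using r1c by simp
    ultimately show ?thesis unfolding P1_def by simp
  qed
  have z2: "x2 = 0\<^sub>v g2 \<Longrightarrow> x2 \<bullet> r2 = 0 \<and> P2 = 0"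
  proof -
    assume e: "x2 = 0\<^sub>v g2"
    have "x2 \<bullet> (Q2 *\<^sub>v x2) = 0" unfolding e by (rule scalar_prod_left_zero[of _ g2]) (rule mult_mat_vec_carrier[OF Q2c], simp)
    moreover have "x2 \<bullet> r2 = 0" unfolding e using r2c by simp
    ultimately show ?thesis unfolding P2_def by simp
  qed
  have pos1: "x1 \<noteq> 0\<^sub>v g1 \<Longrightarrow> P1 > 0" unfolding P1_def by (rule P1_pos[OF Q1c r1c p1 x1])
  have pos2: "x2 \<noteq> 0\<^sub>v g2 \<Longrightarrow> P2 > 0" unfolding P2_def by (rule P2_pos[OF Q2c r2c p2 x2])
  have P1nn: "P1 \<ge> 0" using z1 pos1 by (cases "x1 = 0\<^sub>v g1") auto
  have P2nn: "P2 \<ge> 0" using z2 pos2 by (cases "x2 = 0\<^sub>v g2") auto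
  have sq: "(z $ 0 + x1 \<bullet> r1 + x2 \<bullet> r2)^2 \<ge> 0" by simp
  show "0 < X \<bullet> (Qbar_mat Q1 r1 r2 Q2 *\<^sub>v X)"
  proof (cases "x1 = 0\<^sub>v g1")
    case False thus ?thesis unfolding F using pos1 P2nn sq by linarith
  next
    case x1z: True
    show ?thesis
    proof (cases "x2 = 0\<^sub>v g2")
      case False thus ?thesis unfolding F using pos2 P1nn sq by linarith
    next
      case x2z: True
      have "z \<noteq> 0\<^sub>v 1"
      proof
        assume "z = 0\<^sub>v 1"
        hence "X = 0\<^sub>v g1 @\<^sub>v (0\<^sub>v 1 @\<^sub>v 0\<^sub>v g2)" unfolding Xe x1z x2z by simp
        also have "\<dots> = 0\<^sub>v (g1+(1+g2))" by (simp only: zero_append)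
        finally show False using nz by simp
      qed
      hence "z $ 0 \<noteq> 0" using vec1_zero[of z] z by auto
      thus ?thesis unfolding F using z1[OF x1z] z2[OF x2z] by simp
    qed
  qed
qed

lemma QQ_index:
  fixes Q1 Q2 :: "real mat"
  assumes Q1c: "Q1 \<in> carrier_mat g1 g1" and r1c: "r1 \<in> carrier_vec g1"
    and Q2c: "Q2 \<in> carrier_mat g2 g2" and r2c: "r2 \<in> carrier_vec g2"
    and i: "i < g1 + (1+g2)" and j: "j < g1 + (1+g2)"
  shows "Qbar_mat Q1 r1 r2 Q2 $$ (i,j) =
    (if i < g1 then (if j < g1 then Q1 $$ (i,j) else r1 $ i * (vec_of_list [1] @\<^sub>v r2) $ (j - g1))
     else (if j < g1 then (vec_of_list [1] @\<^sub>v r2) $ (i - g1) * r1 $ j else Qbar2_mat r2 Q2 $$ (i - g1, j - g1)))"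
proof -
  define w where "w = vec_of_list [1::real] @\<^sub>v r2"
  have v1: "vec_of_list [1::real] \<in> carrier_vec 1" by (rule carrier_vecI) simp
  have w: "w \<in> carrier_vec (1 + g2)" unfolding w_def by (rule append_carrier_vec[OF v1 r2c])
  have d: "dim_vec r1 = g1" "dim_vec w = 1 + g2" using r1c w by auto
  have Q2b: "Qbar2_mat r2 Q2 \<in> carrier_mat (1 + g2) (1 + g2)"
    unfolding Qbar2_mat_def using Q2c r2c by (intro four_block_carrier_mat) auto
  have dd: "dim_row Q1 = g1" "dim_col Q1 = g1" "dim_row (Qbar2_mat r2 Q2) = 1+g2" "dim_col (Qbar2_mat r2 Q2) = 1+g2"
    using Q1c Q2b by auto
  have "Qbar_mat Q1 r1 r2 Q2 $$ (i,j) = (if i < g1 then (if j < g1 then Q1 $$ (i,j) else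
       (mat_of_cols g1 [r1] * mat_of_rows (1+g2) [w]) $$ (i, j - g1))
     else (if j < g1 then (mat_of_cols (1+g2) [w] * mat_of_rows g1 [r1]) $$ (i - g1, j)
       else Qbar2_mat r2 Q2 $$ (i - g1, j - g1)))"
    unfolding Qbar_mat_def Let_def w_def[symmetric] d
    by (subst index_mat_four_block(1)) (use i j dd in simp_all)
  also have "\<dots> = (if i < g1 then (if j < g1 then Q1 $$ (i,j) else r1 $ i * w $ (j - g1))
     else (if j < g1 then w $ (i - g1) * r1 $ j else Qbar2_mat r2 Q2 $$ (i - g1, j - g1)))"
    using i j colrow_index[OF r1c w] colrow_index[OF w r1c] by auto
  finally show ?thesis unfolding w_def .
qed

lemma sym_QQ:
  fixes Q1 Q2 :: "real mat"
  assumes Q1c: "Q1 \<in> carrier_mat g1 g1" and r1c: "r1 \<in> carrier_vec g1"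
    and Q2c: "Q2 \<in> carrier_mat g2 g2" and r2c: "r2 \<in> carrier_vec g2"
    and t1: "transpose_mat (Qbar1_mat Q1 r1) = Qbar1_mat Q1 r1"
    and t2: "transpose_mat (Qbar2_mat r2 Q2) = Qbar2_mat r2 Q2"
  shows "transpose_mat (Qbar_mat Q1 r1 r2 Q2) = Qbar_mat Q1 r1 r2 Q2"
proof -
  have Q2b: "Qbar2_mat r2 Q2 \<in> carrier_mat (1 + g2) (1 + g2)"
    unfolding Qbar2_mat_def using Q2c r2c by (intro four_block_carrier_mat) auto
  have Q1b: "Qbar1_mat Q1 r1 \<in> carrier_mat (g1 + 1) (g1 + 1)"
    unfolding Qbar1_mat_def using Q1c r1c by (intro four_block_carrier_mat) auto
  have s1: "Q1 $$ (j,i) = Q1 $$ (i,j)" if "i < g1" "j < g1" for i j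
  proof -
    have "transpose_mat (Qbar1_mat Q1 r1) $$ (i,j) = Qbar1_mat Q1 r1 $$ (i,j)" using t1 by simp
    thus ?thesis using that Q1c Q1b unfolding Qbar1_mat_def by simp
  qed
  have s2: "Qbar2_mat r2 Q2 $$ (j,i) = Qbar2_mat r2 Q2 $$ (i,j)" if "i < 1+g2" "j < 1+g2" for i j
  proof -
    have "transpose_mat (Qbar2_mat r2 Q2) $$ (i,j) = Qbar2_mat r2 Q2 $$ (i,j)" using t2 by simp
    thus ?thesis using that Q2b by simp
  qed
  have QQc: "Qbar_mat Q1 r1 r2 Q2 \<in> carrier_mat (g1 + (1+g2)) (g1 + (1+g2))"
    unfolding Qbar_mat_def Let_def by (rule four_block_carrier_mat[OF Q1c Q2b])
  show ?thesis
  proof (rule eq_matI)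
    fix i j assume "i < dim_row (Qbar_mat Q1 r1 r2 Q2)" "j < dim_col (Qbar_mat Q1 r1 r2 Q2)"
    hence i: "i < g1 + (1+g2)" and j: "j < g1 + (1+g2)" using QQc by auto
    have "transpose_mat (Qbar_mat Q1 r1 r2 Q2) $$ (i,j) = Qbar_mat Q1 r1 r2 Q2 $$ (j,i)"
      using i j QQc by simp
    also have "\<dots> = Qbar_mat Q1 r1 r2 Q2 $$ (i,j)"
      unfolding QQ_index[OF Q1c r1c Q2c r2c i j] QQ_index[OF Q1c r1c Q2c r2c j i]
      using s1[of i j] s2[of "i - g1" "j - g1"] i j by (auto simp: mult.commute)
    finally show "transpose_mat (Qbar_mat Q1 r1 r2 Q2) $$ (i,j) = Qbar_mat Q1 r1 r2 Q2 $$ (i,j)" .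
  qed (use QQc in auto)
qed

lemma map_zero_vec: fixes f :: "'a::zero \<Rightarrow> 'b::zero" assumes "f 0 = 0" shows "map_vec f (0\<^sub>v n) = 0\<^sub>v n"
  using assms by (intro eq_vecI) auto

lemma ws_main:
  fixes Q1 Q2 :: "real mat"
  assumes B: "B \<in> carrier_mat g1 n1" and b: "b \<in> carrier_vec n1" and C: "C \<in> carrier_mat g2 n2"
    and c: "c \<in> carrier_vec n2" and s1: "simple_mat (A1_mat B b)" and s2: "simple_mat (A2_mat C c)"
    and Q1c: "Q1 \<in> carrier_mat g1 g1" and r1c: "r1 \<in> carrier_vec g1"
    and Q2c: "Q2 \<in> carrier_mat g2 g2" and r2c: "r2 \<in> carrier_vec g2"
    and w1: "well_suited (Qbar1_mat Q1 r1) (A1_mat B b)" and w2: "well_suited (Qbar2_mat r2 Q2) (A2_mat C c)"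
  shows "well_suited (Qbar_mat Q1 r1 r2 Q2) (A_mat B b C c)"
proof -
  have dm: "dim_row (A1_mat B b) = g1 + 1" "dim_col (A1_mat B b) = n1 + 1"
    "dim_row (A2_mat C c) = 1 + g2" "dim_col (A2_mat C c) = n2 + 1"
    "dim_row (A_mat B b C c) = g1 + (1 + g2)" "dim_col (A_mat B b C c) = n1 + (n2 + 1)"
    using B C by (simp_all add: A1_mat_def A2_mat_def A_mat_def)
  let ?M = "map_vec real_of_int"
  have W1: "Qbar1_mat Q1 r1 \<in> carrier_mat (g1+1) (g1+1) \<and> transpose_mat (Qbar1_mat Q1 r1) = Qbar1_mat Q1 r1 \<and>
     pos_def_mat (Qbar1_mat Q1 r1) (g1+1) \<and>
     (\<forall>\<xi>\<in>carrier_vec (g1+1). \<xi> \<noteq> 0\<^sub>v (g1+1) \<longrightarrow>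
        1 \<le> ?M \<xi> \<bullet> (Qbar1_mat Q1 r1 *\<^sub>v ?M \<xi>) \<and>
        (?M \<xi> \<bullet> (Qbar1_mat Q1 r1 *\<^sub>v ?M \<xi>) = 1 \<longleftrightarrow> (\<exists>j<n1+1. \<xi> = col (A1_mat B b) j \<or> - \<xi> = col (A1_mat B b) j)))"
    using w1 unfolding well_suited_def Let_def dm symmetric_real_mat_def .
  have W2: "Qbar2_mat r2 Q2 \<in> carrier_mat (1+g2) (1+g2) \<and> transpose_mat (Qbar2_mat r2 Q2) = Qbar2_mat r2 Q2 \<and>
     pos_def_mat (Qbar2_mat r2 Q2) (1+g2) \<and>
     (\<forall>\<xi>\<in>carrier_vec (1+g2). \<xi> \<noteq> 0\<^sub>v (1+g2) \<longrightarrow>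
        1 \<le> ?M \<xi> \<bullet> (Qbar2_mat r2 Q2 *\<^sub>v ?M \<xi>) \<and>
        (?M \<xi> \<bullet> (Qbar2_mat r2 Q2 *\<^sub>v ?M \<xi>) = 1 \<longleftrightarrow> (\<exists>j<n2+1. \<xi> = col (A2_mat C c) j \<or> - \<xi> = col (A2_mat C c) j)))"
    using w2 unfolding well_suited_def Let_def dm symmetric_real_mat_def .
  have W1i: "\<forall>\<xi>\<in>carrier_vec (g1+1). \<xi> \<noteq> 0\<^sub>v (g1+1) \<longrightarrow>
        1 \<le> ?M \<xi> \<bullet> (Qbar1_mat Q1 r1 *\<^sub>v ?M \<xi>) \<and>
        (?M \<xi> \<bullet> (Qbar1_mat Q1 r1 *\<^sub>v ?M \<xi>) = 1 \<longleftrightarrow> (\<exists>j<n1+1. \<xi> = col (A1_mat B b) j \<or> - \<xi> = col (A1_mat B b) j))"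
    using W1 by (elim conjE)
  have W2i: "\<forall>\<xi>\<in>carrier_vec (1+g2). \<xi> \<noteq> 0\<^sub>v (1+g2) \<longrightarrow>
        1 \<le> ?M \<xi> \<bullet> (Qbar2_mat r2 Q2 *\<^sub>v ?M \<xi>) \<and>
        (?M \<xi> \<bullet> (Qbar2_mat r2 Q2 *\<^sub>v ?M \<xi>) = 1 \<longleftrightarrow> (\<exists>j<n2+1. \<xi> = col (A2_mat C c) j \<or> - \<xi> = col (A2_mat C c) j))"
    using W2 by (elim conjE)
  have W1b: "\<forall>\<xi>\<in>carrier_vec (g1+1). \<xi> \<noteq> 0\<^sub>v (g1+1) \<longrightarrow> 1 \<le> ?M \<xi> \<bullet> (Qbar1_mat Q1 r1 *\<^sub>v ?M \<xi>)"
    using W1i by blast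
  have W2b: "\<forall>\<xi>\<in>carrier_vec (1+g2). \<xi> \<noteq> 0\<^sub>v (1+g2) \<longrightarrow> 1 \<le> ?M \<xi> \<bullet> (Qbar2_mat r2 Q2 *\<^sub>v ?M \<xi>)"
    using W2i by blast
  have t1: "transpose_mat (Qbar1_mat Q1 r1) = Qbar1_mat Q1 r1" using W1 by (elim conjE)
  have t2: "transpose_mat (Qbar2_mat r2 Q2) = Qbar2_mat r2 Q2" using W2 by (elim conjE)
  have p1: "pos_def_mat (Qbar1_mat Q1 r1) (g1+1)" using W1 by (elim conjE)
  have p2: "pos_def_mat (Qbar2_mat r2 Q2) (1+g2)" using W2 by (elim conjE)
  have Q2b: "Qbar2_mat r2 Q2 \<in> carrier_mat (1 + g2) (1 + g2)" using W2 by (elim conjE)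
  have QQc: "Qbar_mat Q1 r1 r2 Q2 \<in> carrier_mat (g1 + (1+g2)) (g1 + (1+g2))"
    unfolding Qbar_mat_def Let_def by (rule four_block_carrier_mat[OF Q1c Q2b])
  have sym: "transpose_mat (Qbar_mat Q1 r1 r2 Q2) = Qbar_mat Q1 r1 r2 Q2"
    by (rule sym_QQ[OF Q1c r1c Q2c r2c t1 t2])
  have pd: "pos_def_mat (Qbar_mat Q1 r1 r2 Q2) (g1+(1+g2))"
    by (rule posdef_QQ[OF Q1c r1c Q2c r2c p1 p2])
  have int: "1 \<le> ?M \<xi> \<bullet> (Qbar_mat Q1 r1 r2 Q2 *\<^sub>v ?M \<xi>) \<and>
        (?M \<xi> \<bullet> (Qbar_mat Q1 r1 r2 Q2 *\<^sub>v ?M \<xi>) = 1 \<longleftrightarrow>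
          (\<exists>j<n1+(n2+1). \<xi> = col (A_mat B b C c) j \<or> - \<xi> = col (A_mat B b C c) j))"
    if X: "\<xi> \<in> carrier_vec (g1+(1+g2))" and nz: "\<xi> \<noteq> 0\<^sub>v (g1+(1+g2))" for \<xi>
  proof -
    define x1 where "x1 = vec_first \<xi> g1"
    define Y where "Y = vec_last \<xi> (1+g2)"
    define z where "z = vec_first Y 1"
    define x2 where "x2 = vec_last Y g2"
    have x1: "x1 \<in> carrier_vec g1" unfolding x1_def by simp
    have Y: "Y \<in> carrier_vec (1+g2)" unfolding Y_def by simp
    have z: "z \<in> carrier_vec 1" unfolding z_def by simp
    have x2: "x2 \<in> carrier_vec g2" unfolding x2_def by simp
    have Ye: "Y = z @\<^sub>v x2" unfolding z_def x2_def by (rule vec_first_last_append[OF Y, symmetric])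
    have Xe: "\<xi> = x1 @\<^sub>v (z @\<^sub>v x2)" unfolding x1_def Ye[symmetric] Y_def by (rule vec_first_last_append[OF X, symmetric])
    have Mx1: "?M x1 \<in> carrier_vec g1" using x1 by simp
    have Mz: "?M z \<in> carrier_vec 1" using z by simp
    have Mx2: "?M x2 \<in> carrier_vec g2" using x2 by simp
    have ME: "?M \<xi> = ?M x1 @\<^sub>v (?M z @\<^sub>v ?M x2)" unfolding Xe map_vec_append ..
    have d: "dim_vec x1 = g1" "dim_vec z = 1" "dim_vec x2 = g2" using x1 z x2 by auto
    show ?thesis
    proof (cases "x2 = 0\<^sub>v g2")
      case x2z: True
      define \<eta> where "\<eta> = x1 @\<^sub>v z"
      have eta: "\<eta> \<in> carrier_vec (g1+1)" unfolding \<eta>_def by (rule append_carrier_vec[OF x1 z])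
      have etanz: "\<eta> \<noteq> 0\<^sub>v (g1+1)"
      proof
        assume "\<eta> = 0\<^sub>v (g1+1)"
        hence "x1 = 0\<^sub>v g1 \<and> z = 0\<^sub>v 1" unfolding \<eta>_def zero_append by (simp add: app_eq_dim d)
        hence "\<xi> = 0\<^sub>v g1 @\<^sub>v (0\<^sub>v 1 @\<^sub>v 0\<^sub>v g2)" unfolding Xe x2z by simp
        also have "\<dots> = 0\<^sub>v (g1+(1+g2))" by (simp only: zero_append)
        finally show False using nz by simp
      qed
      have Meta: "?M \<eta> = ?M x1 @\<^sub>v ?M z" unfolding \<eta>_def map_vec_append ..
      have Mx2z: "?M x2 = 0\<^sub>v g2" unfolding x2z by (rule map_zero_vec) simp
      have F: "?M \<xi> \<bullet> (Qbar_mat Q1 r1 r2 Q2 *\<^sub>v ?M \<xi>) = ?M \<eta> \<bullet> (Qbar1_mat Q1 r1 *\<^sub>v ?M \<eta>)"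
        unfolding ME Mx2z Meta by (rule F_x2_zero[OF Q1c r1c Q2c r2c Mx1 Mz])
      have E: "(\<exists>j<n1+1. \<eta> = col (A1_mat B b) j \<or> - \<eta> = col (A1_mat B b) j) \<longleftrightarrow>
          (\<exists>j<n1+(n2+1). \<xi> = col (A_mat B b C c) j \<or> - \<xi> = col (A_mat B b C c) j)"
        unfolding \<eta>_def Xe x2z by (rule eqv1[OF B b C c s2 x1 z])
      from W1i eta etanz have "1 \<le> ?M \<eta> \<bullet> (Qbar1_mat Q1 r1 *\<^sub>v ?M \<eta>) \<and>
        (?M \<eta> \<bullet> (Qbar1_mat Q1 r1 *\<^sub>v ?M \<eta>) = 1 \<longleftrightarrow> (\<exists>j<n1+1. \<eta> = col (A1_mat B b) j \<or> - \<eta> = col (A1_mat B b) j))"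
        by blast
      thus ?thesis unfolding F E .
    next
      case x2nz: False
      show ?thesis
      proof (cases "x1 = 0\<^sub>v g1")
        case x1z: True
        define \<eta> where "\<eta> = z @\<^sub>v x2"
        have eta: "\<eta> \<in> carrier_vec (1+g2)" unfolding \<eta>_def by (rule append_carrier_vec[OF z x2])
        have etanz: "\<eta> \<noteq> 0\<^sub>v (1+g2)"
        proof
          assume "\<eta> = 0\<^sub>v (1+g2)"
          hence "x2 = 0\<^sub>v g2" unfolding \<eta>_def zero_append by (simp add: app_eq_dim d)
          thus False using x2nz by simp
        qed
        have Meta: "?M \<eta> = ?M z @\<^sub>v ?M x2" unfolding \<eta>_def map_vec_append ..
        have Mx1z: "?M x1 = 0\<^sub>v g1" unfolding x1z by (rule map_zero_vec) simp
        have F: "?M \<xi> \<bullet> (Qbar_mat Q1 r1 r2 Q2 *\<^sub>v ?M \<xi>) = ?M \<eta> \<bullet> (Qbar2_mat r2 Q2 *\<^sub>v ?M \<eta>)"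
          unfolding ME Mx1z Meta by (rule F_x1_zero[OF Q1c r1c Q2c r2c Mz Mx2])
        have E: "(\<exists>j<n2+1. \<eta> = col (A2_mat C c) j \<or> - \<eta> = col (A2_mat C c) j) \<longleftrightarrow>
            (\<exists>j<n1+(n2+1). \<xi> = col (A_mat B b C c) j \<or> - \<xi> = col (A_mat B b C c) j)"
          unfolding \<eta>_def Xe x1z by (rule eqv2[OF B b C c s1 x2 z])
        from W2i eta etanz have "1 \<le> ?M \<eta> \<bullet> (Qbar2_mat r2 Q2 *\<^sub>v ?M \<eta>) \<and>
          (?M \<eta> \<bullet> (Qbar2_mat r2 Q2 *\<^sub>v ?M \<eta>) = 1 \<longleftrightarrow> (\<exists>j<n2+1. \<eta> = col (A2_mat C c) j \<or> - \<eta> = col (A2_mat C c) j))"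
          by blast
        thus ?thesis unfolding F E .
      next
        case x1nz: False
        have p1: "?M x1 \<bullet> (Q1 *\<^sub>v ?M x1) - (?M x1 \<bullet> r1)^2 \<ge> 3/4"
          by (rule P1_int[OF Q1c r1c W1b x1 x1nz])
        have p2: "?M x2 \<bullet> (Q2 *\<^sub>v ?M x2) - (?M x2 \<bullet> r2)^2 \<ge> 3/4"
          by (rule P2_int[OF Q2c r2c W2b x2 x2nz])
        have F: "?M \<xi> \<bullet> (Qbar_mat Q1 r1 r2 Q2 *\<^sub>v ?M \<xi>) =
           (?M x1 \<bullet> (Q1 *\<^sub>v ?M x1) - (?M x1 \<bullet> r1)^2) + (?M x2 \<bullet> (Q2 *\<^sub>v ?M x2) - (?M x2 \<bullet> r2)^2)
           + (?M z $ 0 + ?M x1 \<bullet> r1 + ?M x2 \<bullet> r2)^2"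
          unfolding ME by (rule key_real[OF Q1c r1c Q2c r2c Mx1 Mz Mx2])
        have sq: "(?M z $ 0 + ?M x1 \<bullet> r1 + ?M x2 \<bullet> r2)^2 \<ge> 0" by simp
        have big: "?M \<xi> \<bullet> (Qbar_mat Q1 r1 r2 Q2 *\<^sub>v ?M \<xi>) \<ge> 3/2" unfolding F using p1 p2 sq by linarith
        have E: "\<not> (\<exists>j<n1+(n2+1). \<xi> = col (A_mat B b C c) j \<or> - \<xi> = col (A_mat B b C c) j)"
          unfolding Xe by (rule eqv3[OF B b C c x1 x2 z x1nz x2nz])
        show ?thesis using big E by auto
      qed
    qed
  qed
  show ?thesis unfolding well_suited_def Let_def dm symmetric_real_mat_def
    using QQc sym pd int by blast
qed

theorem lemma4p2p4:
  fixes B C :: "int mat" and b c :: "int vec" and Qb1 Qb2 :: "real mat"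
    and g1 n1 g2 n2 :: nat
  assumes "B \<in> carrier_mat g1 n1" and "b \<in> carrier_vec n1"
    and "C \<in> carrier_mat g2 n2" and "c \<in> carrier_vec n2"
    and "simple_mat (A1_mat B b)" and "totally_unimodular (A1_mat B b)"
    and "simple_mat (A2_mat C c)" and "totally_unimodular (A2_mat C c)"
    and "well_suited Qb1 (A1_mat B b)"
    and "well_suited Qb2 (A2_mat C c)"
  shows "\<exists>Q1 r1 Q2 r2.
           Q1 \<in> carrier_mat g1 g1 \<and> r1 \<in> carrier_vec g1 \<and>
           Q2 \<in> carrier_mat g2 g2 \<and> r2 \<in> carrier_vec g2 \<and>
           Qb1 = Qbar1_mat Q1 r1 \<and> Qb2 = Qbar2_mat r2 Q2 \<and>
           well_suited (Qbar_mat Q1 r1 r2 Q2) (A_mat B b C c)"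
proof -
  note B = assms(1) and b = assms(2) and C = assms(3) and c = assms(4)
  have dm: "dim_row (A1_mat B b) = g1 + 1" "dim_col (A1_mat B b) = n1 + 1"
    "dim_row (A2_mat C c) = 1 + g2" "dim_col (A2_mat C c) = n2 + 1"
    using B C by (simp_all add: A1_mat_def A2_mat_def)
  let ?M = "map_vec real_of_int"
  have W1: "Qb1 \<in> carrier_mat (g1+1) (g1+1) \<and> transpose_mat Qb1 = Qb1 \<and>
     pos_def_mat Qb1 (g1+1) \<and>
     (\<forall>\<xi>\<in>carrier_vec (g1+1). \<xi> \<noteq> 0\<^sub>v (g1+1) \<longrightarrow>
        1 \<le> ?M \<xi> \<bullet> (Qb1 *\<^sub>v ?M \<xi>) \<and>
        (?M \<xi> \<bullet> (Qb1 *\<^sub>v ?M \<xi>) = 1 \<longleftrightarrow> (\<exists>j<n1+1. \<xi> = col (A1_mat B b) j \<or> - \<xi> = col (A1_mat B b) j)))"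
    using assms(9) unfolding well_suited_def Let_def dm symmetric_real_mat_def .
  have W2: "Qb2 \<in> carrier_mat (1+g2) (1+g2) \<and> transpose_mat Qb2 = Qb2 \<and>
     pos_def_mat Qb2 (1+g2) \<and>
     (\<forall>\<xi>\<in>carrier_vec (1+g2). \<xi> \<noteq> 0\<^sub>v (1+g2) \<longrightarrow>
        1 \<le> ?M \<xi> \<bullet> (Qb2 *\<^sub>v ?M \<xi>) \<and>
        (?M \<xi> \<bullet> (Qb2 *\<^sub>v ?M \<xi>) = 1 \<longleftrightarrow> (\<exists>j<n2+1. \<xi> = col (A2_mat C c) j \<or> - \<xi> = col (A2_mat C c) j)))"
    using assms(10) unfolding well_suited_def Let_def dm symmetric_real_mat_def .
  have Qb1c: "Qb1 \<in> carrier_mat (g1+1) (g1+1)" using W1 by (elim conjE)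
  have t1: "transpose_mat Qb1 = Qb1" using W1 by (elim conjE)
  have W1i: "\<forall>\<xi>\<in>carrier_vec (g1+1). \<xi> \<noteq> 0\<^sub>v (g1+1) \<longrightarrow>
        1 \<le> ?M \<xi> \<bullet> (Qb1 *\<^sub>v ?M \<xi>) \<and>
        (?M \<xi> \<bullet> (Qb1 *\<^sub>v ?M \<xi>) = 1 \<longleftrightarrow> (\<exists>j<n1+1. \<xi> = col (A1_mat B b) j \<or> - \<xi> = col (A1_mat B b) j))"
    using W1 by (elim conjE)
  have Qb2c: "Qb2 \<in> carrier_mat (1+g2) (1+g2)" using W2 by (elim conjE)
  have t2: "transpose_mat Qb2 = Qb2" using W2 by (elim conjE)
  have W2i: "\<forall>\<xi>\<in>carrier_vec (1+g2). \<xi> \<noteq> 0\<^sub>v (1+g2) \<longrightarrow>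
        1 \<le> ?M \<xi> \<bullet> (Qb2 *\<^sub>v ?M \<xi>) \<and>
        (?M \<xi> \<bullet> (Qb2 *\<^sub>v ?M \<xi>) = 1 \<longleftrightarrow> (\<exists>j<n2+1. \<xi> = col (A2_mat C c) j \<or> - \<xi> = col (A2_mat C c) j))"
    using W2 by (elim conjE)
  have one_nz: "vec 1 (\<lambda>_. 1::int) \<noteq> 0\<^sub>v 1"
  proof
    assume "vec 1 (\<lambda>_. 1::int) = 0\<^sub>v 1"
    hence "vec 1 (\<lambda>_. 1::int) $ 0 = 0\<^sub>v 1 $ 0" by simp
    thus False by simp
  qed
  define e1 where "e1 = col (A1_mat B b) n1"
  have e1v: "e1 = 0\<^sub>v g1 @\<^sub>v vec 1 (\<lambda>_. 1)" unfolding e1_def by (rule col_A1_2[OF B b])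
  have e1c: "e1 \<in> carrier_vec (g1+1)" unfolding e1v by (rule append_carrier_vec) simp_all
  have e1nz: "e1 \<noteq> 0\<^sub>v (g1+1)" unfolding e1v zero_append using one_nz by (simp add: app_eq_dim)
  have Me1: "?M e1 = unit_vec (g1+1) g1" unfolding e1v by (intro eq_vecI) (auto simp: unit_vec_def)
  have "\<exists>j<n1+1. e1 = col (A1_mat B b) j \<or> - e1 = col (A1_mat B b) j"
    unfolding e1_def by (intro exI[of _ n1]) simp
  hence "?M e1 \<bullet> (Qb1 *\<^sub>v ?M e1) = 1" using W1i e1c e1nz by blast
  hence Qb1gg: "Qb1 $$ (g1,g1) = 1" unfolding Me1 using uq_unit[OF Qb1c, of g1] by simp
  define e2 where "e2 = col (A2_mat C c) n2"
  have e2v: "e2 = vec 1 (\<lambda>_. 1) @\<^sub>v 0\<^sub>v g2" unfolding e2_def by (rule col_A2_2[OF C c])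
  have e2c: "e2 \<in> carrier_vec (1+g2)" unfolding e2v by (rule append_carrier_vec) simp_all
  have e2nz: "e2 \<noteq> 0\<^sub>v (1+g2)" unfolding e2v zero_append using one_nz by (simp add: app_eq_dim)
  have Me2: "?M e2 = unit_vec (1+g2) 0" unfolding e2v by (intro eq_vecI) (auto simp: unit_vec_def)
  have "\<exists>j<n2+1. e2 = col (A2_mat C c) j \<or> - e2 = col (A2_mat C c) j"
    unfolding e2_def by (intro exI[of _ n2]) simp
  hence "?M e2 \<bullet> (Qb2 *\<^sub>v ?M e2) = 1" using W2i e2c e2nz by blast
  hence Qb200: "Qb2 $$ (0,0) = 1" unfolding Me2 using uq_unit[OF Qb2c, of 0] by simp
  define Q1 where "Q1 = mat g1 g1 (\<lambda>(i,j). Qb1 $$ (i,j))"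
  define r1 where "r1 = vec g1 (\<lambda>i. Qb1 $$ (i,g1))"
  define Q2 where "Q2 = mat g2 g2 (\<lambda>(i,j). Qb2 $$ (i+1,j+1))"
  define r2 where "r2 = vec g2 (\<lambda>i. Qb2 $$ (i+1,0))"
  have Qb1e: "Qb1 = Qbar1_mat Q1 r1" unfolding Q1_def r1_def by (rule decomp1[OF Qb1c t1 Qb1gg])
  have Qb2e: "Qb2 = Qbar2_mat r2 Q2" unfolding Q2_def r2_def by (rule decomp2[OF Qb2c t2 Qb200])
  have Q1c: "Q1 \<in> carrier_mat g1 g1" unfolding Q1_def by simp
  have r1c: "r1 \<in> carrier_vec g1" unfolding r1_def by simp
  have Q2c: "Q2 \<in> carrier_mat g2 g2" unfolding Q2_def by simp
  have r2c: "r2 \<in> carrier_vec g2" unfolding r2_def by simp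
  have w1: "well_suited (Qbar1_mat Q1 r1) (A1_mat B b)" using assms(9) unfolding Qb1e .
  have w2: "well_suited (Qbar2_mat r2 Q2) (A2_mat C c)" using assms(10) unfolding Qb2e .
  have WS: "well_suited (Qbar_mat Q1 r1 r2 Q2) (A_mat B b C c)"
    by (rule ws_main[OF B b C c assms(5) assms(7) Q1c r1c Q2c r2c w1 w2])
  show ?thesis
    by (rule exI[of _ Q1], rule exI[of _ r1], rule exI[of _ Q2], rule exI[of _ r2])
      (intro conjI Q1c r1c Q2c r2c Qb1e Qb2e WS)
qed

end
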